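(* Let $K\in\{\mathbb R,\mathbb C,\mathbb H\}$ and let $(E,d)$ be a metric vector space over $K$ such that $d$ is $C_0$-translation invariant and $(C_1,C_2,C_3)$-lipschitz multiplicative. Let $d_0(x,y)=\int_{\mathbb U}d(ux,uy)\,d\mu(u)$, $\delta_0(x,y)=\lim_{n\to\infty}\frac1n d_0(nx,ny)$, and $E_0=\{x\in E:\delta_0(x,0)=0\}$ (the maximal linear subspace of $E$ on which $d$ is bounded). For a class $\bar x=x+E_0\in E/E_0$ set $\|\bar x\|=\delta_0(x,0)$. Then this is independent of the representative $x$ of $\bar x$, and $\|\cdot\|:E/E_0\to\mathbb R_+$ is a norm.
   Context: A metric vector space is a topological vector space over $K$ whose topology is generated by the metric $d$. $\mathbb U=\{u\in K:|u|=1\}$, $\mu$ the right-invariant Haar probability measure on $\mathbb U$. $d$ is $C_0$-translation invariant if $d(x+z,y+z)\le d(x,y)+C_0$ for all $x,y,z$. $(C_1,C_2,C_3)$-lipschitz multiplicative ($C_1\ge1$, $C_2,C_3\ge0$) means $C_1^{-1}|\lambda|d(x,y)-C_2|\lambda|-C_3\le d(\lambda x,\lambda y)\le C_1|\lambda|d(x,y)+C_2|\lambda|+C_3$ for all $\lambda\in K$, $x,y\in E$. (Under these hypotheses the limit defining $\delta_0$ exists.) *)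

theory Defs
  imports "HOL-Analysis.Analysis" "HOL-Probability.Probability"
begin

text \<open>The scalar field K is modelled by a type of class real_normed_div_algebra and
  euclidean_space (by Frobenius these are exactly R, C, H up to isomorphism).\<close>

definition K_vector_space :: "('k::real_normed_div_algebra \<Rightarrow> 'e::ab_group_add \<Rightarrow> 'e) \<Rightarrow> bool" where
  "K_vector_space sm \<longleftrightarrow>
     (\<forall>a x y. sm a (x + y) = sm a x + sm a y) \<and>
     (\<forall>a b x. sm (a + b) x = sm a x + sm b x) \<and>
     (\<forall>a b x. sm a (sm b x) = sm (a * b) x) \<and>
     (\<forall>x. sm 1 x = x)"

definition metric_vector_space ::
  "('k::{real_normed_div_algebra,euclidean_space} \<Rightarrow> 'e::ab_group_add \<Rightarrow> 'e) \<Rightarrow> ('e \<Rightarrow> 'e \<Rightarrow> real) \<Rightarrow> bool" where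
  "metric_vector_space sm d \<longleftrightarrow>
     K_vector_space sm \<and> Metric_space UNIV d \<and>
     continuous_map (prod_topology (Metric_space.mtopology UNIV d) (Metric_space.mtopology UNIV d))
        (Metric_space.mtopology UNIV d) (\<lambda>(x, y). x + y) \<and>
     continuous_map (prod_topology euclidean (Metric_space.mtopology UNIV d))
        (Metric_space.mtopology UNIV d) (\<lambda>(a, x). sm a x)"

definition translation_invariant :: "real \<Rightarrow> ('e::ab_group_add \<Rightarrow> 'e \<Rightarrow> real) \<Rightarrow> bool" where
  "translation_invariant C0 d \<longleftrightarrow> (\<forall>x y z. d (x + z) (y + z) \<le> d x y + C0)"

definition lipschitz_multiplicative ::
  "real \<Rightarrow> real \<Rightarrow> real \<Rightarrow> ('k::real_normed_div_algebra \<Rightarrow> 'e \<Rightarrow> 'e) \<Rightarrow> ('e \<Rightarrow> 'e \<Rightarrow> real) \<Rightarrow> bool" where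
  "lipschitz_multiplicative C1 C2 C3 sm d \<longleftrightarrow> C1 \<ge> 1 \<and> C2 \<ge> 0 \<and> C3 \<ge> 0 \<and>
     (\<forall>c x y. norm c * d x y / C1 - C2 * norm c - C3 \<le> d (sm c x) (sm c y) \<and>
              d (sm c x) (sm c y) \<le> C1 * norm c * d x y + C2 * norm c + C3)"

definition unitK :: "'k::real_normed_div_algebra set" where
  "unitK = {u. norm u = 1}"

definition right_haar_prob :: "'k::{real_normed_div_algebra,euclidean_space} measure \<Rightarrow> bool" where
  "right_haar_prob \<mu> \<longleftrightarrow> prob_space \<mu> \<and> sets \<mu> = sets (restrict_space borel unitK) \<and>
     (\<forall>A\<in>sets \<mu>. \<forall>v\<in>unitK. measure \<mu> ((\<lambda>u. u * v) ` A) = measure \<mu> A)"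

definition d0 :: "'k::{real_normed_div_algebra,euclidean_space} measure \<Rightarrow> ('k \<Rightarrow> 'e \<Rightarrow> 'e) \<Rightarrow> ('e \<Rightarrow> 'e \<Rightarrow> real) \<Rightarrow> 'e \<Rightarrow> 'e \<Rightarrow> real" where
  "d0 \<mu> sm d x y = (\<integral>u. d (sm u x) (sm u y) \<partial>\<mu>)"

definition delta0 :: "'k::{real_normed_div_algebra,euclidean_space} measure \<Rightarrow> ('k \<Rightarrow> 'e \<Rightarrow> 'e) \<Rightarrow> ('e \<Rightarrow> 'e \<Rightarrow> real) \<Rightarrow> 'e \<Rightarrow> 'e \<Rightarrow> real" where
  "delta0 \<mu> sm d x y = lim (\<lambda>n. d0 \<mu> sm d (sm (of_nat n) x) (sm (of_nat n) y) / real n)"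

definition E0 :: "'k::{real_normed_div_algebra,euclidean_space} measure \<Rightarrow> ('k \<Rightarrow> 'e::zero \<Rightarrow> 'e) \<Rightarrow> ('e \<Rightarrow> 'e \<Rightarrow> real) \<Rightarrow> 'e set" where
  "E0 \<mu> sm d = {x. delta0 \<mu> sm d x 0 = 0}"

end

theory Submission
  imports Defs
begin


lemma subadd_mult:
  fixes g :: "nat \<Rightarrow> real"
  assumes sub: "\<And>m n. g (m + n) \<le> g m + g n"
  shows "g (q * k + r) \<le> real q * g k + g r"
proof (induction q)
  case 0 then show ?case by simp
next
  case (Suc q)
  have "g (Suc q * k + r) = g (k + (q * k + r))" by (simp add: algebra_simps)
  also have "\<dots> \<le> g k + g (q * k + r)" by (rule sub)
  also have "\<dots> \<le> g k + (real q * g k + g r)" using Suc by simp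
  finally show ?case by (simp add: algebra_simps)
qed

lemma fekete:
  fixes g :: "nat \<Rightarrow> real"
  assumes sub: "\<And>m n. g (m + n) \<le> g m + g n" and nn: "\<And>n. g n \<ge> 0"
  shows "convergent (\<lambda>n. g n / real n)"
proof -
  define S where "S = (\<lambda>n. g n / real n) ` {1..}"
  define L where "L = Inf S"
  have bdd: "bdd_below S" unfolding S_def
    by (rule bdd_belowI[of _ 0]) (auto intro: divide_nonneg_nonneg nn)
  have low: "L \<le> g n / real n" if "n \<ge> 1" for n
    unfolding L_def S_def using bdd that unfolding S_def by (auto intro: cInf_lower)
  have "(\<lambda>n. g n / real n) \<longlonglongrightarrow> L"
  proof (rule order_tendstoI)
    fix a assume "a < L"
    then show "\<forall>\<^sub>F n in sequentially. a < g n / real n"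
      using low by (auto simp: eventually_sequentially intro!: exI[of _ 1] less_le_trans[OF \<open>a < L\<close>])
  next
    fix a assume "L < a"
    have "S \<noteq> {}" unfolding S_def by auto
    then obtain s where "s \<in> S" "s < a" using \<open>L < a\<close> bdd unfolding L_def by (meson cInf_lessD)
    then obtain k where k: "k \<ge> 1" "g k / real k < a" unfolding S_def by auto
    define M where "M = Max (g ` {..<k})"
    have M: "g r \<le> M" if "r < k" for r unfolding M_def using that by auto
    have M0: "M \<ge> 0" using M[of 0] nn[of 0] k(1) by simp
    define b where "b = a - g k / real k"
    have b: "b > 0" using k unfolding b_def by simp
    have ev: "\<forall>\<^sub>F n in sequentially. M / real n < b"
      using order_tendstoD(2)[OF lim_const_over_n[of M] b] .
    show "\<forall>\<^sub>F n in sequentially. g n / real n < a"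
      using ev eventually_ge_at_top[of 1]
    proof eventually_elim
      case (elim n)
      define q where "q = n div k"
      define r where "r = n mod k"
      have n: "n = q * k + r" unfolding q_def r_def by simp
      have rk: "r < k" unfolding r_def using k by simp
      have "g n \<le> real q * g k + g r" using subadd_mult[OF sub] n by simp
      also have "\<dots> \<le> real q * g k + M" using M[OF rk] by simp
      finally have gn: "g n \<le> real q * g k + M" .
      have qk: "real q * real k \<le> real n" using n by (simp flip: of_nat_mult)
      have "real q * g k = (real q * real k) * (g k / real k)" using k by simp
      also have "\<dots> \<le> real n * (g k / real k)"
        using qk nn[of k] by (intro mult_right_mono) auto
      finally have "g n \<le> real n * (g k / real k) + M" using gn by simp
      then have "g n / real n \<le> g k / real k + M / real n"
        using elim by (simp add: field_simps)
      then show ?case using elim b_def by simp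
    qed
  qed
  then show ?thesis by (rule convergentI)
qed


locale P6 =
  fixes sm :: "'k::{real_normed_div_algebra,euclidean_space} \<Rightarrow> 'e::ab_group_add \<Rightarrow> 'e"
    and d :: "'e \<Rightarrow> 'e \<Rightarrow> real"
    and \<mu> :: "'k measure"
    and C0 C1 C2 C3 :: real
  assumes mvs: "metric_vector_space sm d"
    and ti: "translation_invariant C0 d"
    and lm: "lipschitz_multiplicative C1 C2 C3 sm d"
    and rh: "right_haar_prob \<mu>"
begin

lemma vs: "K_vector_space sm" using mvs unfolding metric_vector_space_def by blast
lemma sm_add: "sm a (x + y) = sm a x + sm a y" using vs unfolding K_vector_space_def by blast
lemma sm_distrib: "sm (a + b) x = sm a x + sm b x" using vs unfolding K_vector_space_def by blast
lemma sm_assoc: "sm a (sm b x) = sm (a * b) x" using vs unfolding K_vector_space_def by blast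
lemma sm_one: "sm 1 x = x" using vs unfolding K_vector_space_def by blast
lemma sm_zero_left: "sm 0 x = 0"
  using sm_distrib[of 0 0 x] by simp
lemma sm_zero_right: "sm a 0 = 0"
  using sm_add[of a 0 0] by simp
lemma sm_minus: "sm (-1) x = - x"
  using sm_distrib[of 1 "-1" x] by (simp add: sm_one sm_zero_left eq_neg_iff_add_eq_0 add.commute)

lemma MS: "Metric_space UNIV d" using mvs unfolding metric_vector_space_def by blast
lemma d_nonneg: "d x y \<ge> 0" using MS by (simp add: Metric_space_def)
lemma d_self: "d x x = 0" using MS by (simp add: Metric_space_def)
lemma d_tri: "d x z \<le> d x y + d y z" using MS by (simp add: Metric_space_def)
lemma d_trans: "d (x + z) (y + z) \<le> d x y + C0" using ti unfolding translation_invariant_def by blast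
lemma C0: "C0 \<ge> 0" using d_trans[of 0 0 0] by (simp add: d_self)
lemma C1: "C1 \<ge> 1" and C2: "C2 \<ge> 0" and C3: "C3 \<ge> 0"
  using lm unfolding lipschitz_multiplicative_def by auto
lemma d_lip: "d (sm c x) (sm c y) \<le> C1 * norm c * d x y + C2 * norm c + C3"
  using lm unfolding lipschitz_multiplicative_def by blast

lemma PS: "prob_space \<mu>" using rh unfolding right_haar_prob_def by blast
lemma sets_mu: "sets \<mu> = sets (restrict_space borel unitK)" using rh unfolding right_haar_prob_def by blast
lemma space_mu: "space \<mu> = unitK"
  using sets_eq_imp_space_eq[OF sets_mu] by (simp add: space_restrict_space)
lemma inv_mu: "A \<in> sets \<mu> \<Longrightarrow> v \<in> unitK \<Longrightarrow> measure \<mu> ((\<lambda>u. u * v) ` A) = measure \<mu> A"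
  using rh unfolding right_haar_prob_def by blast

lemma cont_sm: "continuous_map euclidean (Metric_space.mtopology UNIV d) (\<lambda>u. sm u x)"
proof -
  have c: "continuous_map (prod_topology euclidean (Metric_space.mtopology UNIV d))
        (Metric_space.mtopology UNIV d) (\<lambda>(a, x). sm a x)"
    using mvs unfolding metric_vector_space_def by blast
  have p: "continuous_map euclidean (prod_topology euclidean (Metric_space.mtopology UNIV d)) (\<lambda>u. (u, x))"
    by (intro continuous_map_pairedI) (auto simp: Metric_space.topspace_mtopology[OF MS])
  show ?thesis using continuous_map_compose[OF p c] by (simp add: o_def)
qed

definition Dg :: "'e \<Rightarrow> 'k \<Rightarrow> real" where "Dg x u = d (sm u x) 0"
definition D :: "'e \<Rightarrow> real" where "D x = (\<integral>u. Dg x u \<partial>\<mu>)"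

lemma Dg_cont: "continuous_on UNIV (Dg x)"
proof -
  let ?m = "metric (UNIV :: 'e set, d)"
  have "continuous_map euclidean euclidean (\<lambda>u. mdist ?m (sm u x) 0)"
    by (intro continuous_map_mdist) (auto simp: Metric_space.mtopology_of[OF MS] cont_sm
        Metric_space.topspace_mtopology[OF MS])
  then show ?thesis by (simp add: Metric_space.mdist_metric[OF MS] Dg_def[abs_def])
qed

lemma Dg_meas: "Dg x \<in> borel_measurable \<mu>"
proof -
  have "Dg x \<in> borel_measurable (restrict_space borel unitK)"
    by (intro measurable_restrict_space1 borel_measurable_continuous_onI Dg_cont)
  then show ?thesis using measurable_cong_sets[OF sets_mu refl] by blast
qed

lemma Dg_bound: "u \<in> unitK \<Longrightarrow> Dg (sm c x) u \<le> C1 * norm c * d x 0 + C2 * norm c + C3"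
  using d_lip[of "u * c" x 0] by (simp add: Dg_def sm_assoc sm_zero_right unitK_def norm_mult)

lemma Dg_int: "integrable \<mu> (Dg x)"
proof -
  interpret prob_space \<mu> by (rule PS)
  show ?thesis
  proof (rule integrable_const_bound[where B="C1 * d x 0 + C2 + C3"])
    show "AE u in \<mu>. norm (Dg x u) \<le> C1 * d x 0 + C2 + C3"
      using Dg_bound[of _ 1 x] by (auto simp: space_mu sm_one Dg_def d_nonneg intro!: AE_I2)
  qed (rule Dg_meas)
qed


lemma D_nonneg: "D x \<ge> 0"
  unfolding D_def Dg_def by (rule integral_nonneg_AE) (simp add: d_nonneg)

lemma D_zero: "D 0 = 0"
  unfolding D_def Dg_def by (simp add: sm_zero_right d_self)

lemma D_add: "D (x + y) \<le> D x + D y + C0"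
proof -
  interpret prob_space \<mu> by (rule PS)
  have "D (x + y) \<le> (\<integral>u. Dg x u + Dg y u + C0 \<partial>\<mu>)"
    unfolding D_def
  proof (rule integral_mono)
    show "integrable \<mu> (\<lambda>u. Dg x u + Dg y u + C0)" using Dg_int by auto
    fix u
    have "d (sm u x + sm u y) 0 \<le> d (sm u x + sm u y) (0 + sm u y) + d (0 + sm u y) 0"
      by (rule d_tri)
    also have "\<dots> \<le> d (sm u x) 0 + C0 + d (sm u y) 0"
      using d_trans[of "sm u x" "sm u y" 0] by simp
    finally show "Dg (x + y) u \<le> Dg x u + Dg y u + C0" by (simp add: Dg_def sm_add)
  qed (rule Dg_int)
  also have "\<dots> = D x + D y + C0"
    unfolding D_def using Dg_int by (simp add: prob_space)
  finally show ?thesis .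
qed

lemma D_bound: "D (sm c x) \<le> C1 * norm c * d x 0 + C2 * norm c + C3"
proof -
  interpret prob_space \<mu> by (rule PS)
  have "D (sm c x) \<le> (\<integral>u. C1 * norm c * d x 0 + C2 * norm c + C3 \<partial>\<mu>)"
    unfolding D_def by (rule integral_mono) (auto simp: Dg_int Dg_bound space_mu)
  then show ?thesis by (simp add: prob_space)
qed

lemma distr_inv: assumes v: "v \<in> unitK" shows "distr \<mu> \<mu> (\<lambda>w. w * v) = \<mu>"
proof -
  interpret prob_space \<mu> by (rule PS)
  have vn: "norm v = 1" using v by (simp add: unitK_def)
  have v0: "v \<noteq> 0" using vn by auto
  have fm: "(\<lambda>w. w * v) \<in> measurable \<mu> \<mu>"
  proof -
    have "(\<lambda>w. w * v) \<in> measurable (restrict_space borel unitK) (restrict_space borel unitK)"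
      by (intro measurable_restrict_space3 borel_measurable_continuous_onI)
         (auto intro!: continuous_intros simp: unitK_def norm_mult vn)
    then show ?thesis using measurable_cong_sets[OF sets_mu sets_mu] by blast
  qed
  show ?thesis
  proof (rule measure_eqI)
    fix A assume A: "A \<in> sets (distr \<mu> \<mu> (\<lambda>w. w * v))"
    then have A': "A \<in> sets \<mu>" by simp
    have Asub: "A \<subseteq> unitK" using sets.sets_into_space[OF A'] space_mu by simp
    have eq: "(\<lambda>w. w * v) -` A \<inter> space \<mu> = (\<lambda>w. w * inverse v) ` A"
    proof
      show "(\<lambda>w. w * v) -` A \<inter> space \<mu> \<subseteq> (\<lambda>w. w * inverse v) ` A"
      proof
        fix w assume "w \<in> (\<lambda>w. w * v) -` A \<inter> space \<mu>"
        then have "w * v \<in> A" by simp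
        moreover have "w = (w * v) * inverse v" using v0 by (auto simp: mult.assoc)
        ultimately show "w \<in> (\<lambda>w. w * inverse v) ` A" by blast
      qed
      show "(\<lambda>w. w * inverse v) ` A \<subseteq> (\<lambda>w. w * v) -` A \<inter> space \<mu>"
      proof
        fix w assume "w \<in> (\<lambda>w. w * inverse v) ` A"
        then obtain a where a: "a \<in> A" "w = a * inverse v" by blast
        have "w * v = a" using a v0 by (auto simp: mult.assoc)
        moreover have "norm w = 1" using a Asub vn by (auto simp: unitK_def norm_mult norm_inverse)
        ultimately show "w \<in> (\<lambda>w. w * v) -` A \<inter> space \<mu>" using a by (simp add: space_mu unitK_def)
      qed
    qed
    have iv: "inverse v \<in> unitK" using vn by (simp add: unitK_def norm_inverse)
    have "emeasure (distr \<mu> \<mu> (\<lambda>w. w * v)) A = emeasure \<mu> ((\<lambda>w. w * inverse v) ` A)"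
      using emeasure_distr[OF fm A'] eq by simp
    also have "\<dots> = ennreal (measure \<mu> ((\<lambda>w. w * inverse v) ` A))"
      by (rule emeasure_eq_measure)
    also have "\<dots> = ennreal (measure \<mu> A)" using inv_mu[OF A' iv] by simp
    also have "\<dots> = emeasure \<mu> A" by (simp add: emeasure_eq_measure)
    finally show "emeasure (distr \<mu> \<mu> (\<lambda>w. w * v)) A = emeasure \<mu> A" .
  qed simp
qed

lemma D_unit: assumes v: "v \<in> unitK" shows "D (sm v x) = D x"
proof -
  have vn: "norm v = 1" using v by (simp add: unitK_def)
  have fm: "(\<lambda>w. w * v) \<in> measurable \<mu> \<mu>"
  proof -
    have "(\<lambda>w. w * v) \<in> measurable (restrict_space borel unitK) (restrict_space borel unitK)"
      by (intro measurable_restrict_space3 borel_measurable_continuous_onI)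
         (auto intro!: continuous_intros simp: unitK_def norm_mult vn)
    then show ?thesis using measurable_cong_sets[OF sets_mu sets_mu] by blast
  qed
  have "D x = integral\<^sup>L (distr \<mu> \<mu> (\<lambda>w. w * v)) (Dg x)"
    unfolding D_def using distr_inv[OF v] by simp
  also have "\<dots> = (\<integral>w. Dg x (w * v) \<partial>\<mu>)"
    by (rule integral_distr[OF fm Dg_meas])
  also have "\<dots> = D (sm v x)" unfolding D_def Dg_def by (simp add: sm_assoc)
  finally show ?thesis by simp
qed


lemma delta0_eq: "delta0 \<mu> sm d x 0 = lim (\<lambda>n. D (sm (of_nat n) x) / real n)"
  unfolding delta0_def d0_def D_def Dg_def by (simp add: sm_zero_right)

lemma conv: "(\<lambda>n. D (sm (of_nat n) x) / real n) \<longlonglongrightarrow> delta0 \<mu> sm d x 0"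
proof -
  let ?g = "\<lambda>n. D (sm (of_nat n) x) + C0"
  have "convergent (\<lambda>n. ?g n / real n)"
  proof (rule fekete)
    fix m n
    have "D (sm (of_nat (m + n)) x) \<le> D (sm (of_nat m) x) + D (sm (of_nat n) x) + C0"
      using D_add[of "sm (of_nat m) x" "sm (of_nat n) x"] by (simp add: sm_distrib)
    then show "?g (m + n) \<le> ?g m + ?g n" using C0 by simp
  next
    fix n show "?g n \<ge> 0" using D_nonneg C0 by (simp add: add_nonneg_nonneg)
  qed
  then obtain L where L: "(\<lambda>n. ?g n / real n) \<longlonglongrightarrow> L" by (auto simp: convergent_def)
  have "(\<lambda>n. ?g n / real n - C0 / real n) \<longlonglongrightarrow> L - 0"
    by (intro tendsto_diff L lim_const_over_n)
  moreover have "(\<lambda>n. ?g n / real n - C0 / real n) = (\<lambda>n. D (sm (of_nat n) x) / real n)"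
    by (simp add: add_divide_distrib)
  ultimately have "(\<lambda>n. D (sm (of_nat n) x) / real n) \<longlonglongrightarrow> L" by simp
  then show ?thesis unfolding delta0_eq by (simp add: limI)
qed

abbreviation del where "del x \<equiv> delta0 \<mu> sm d x 0"

lemma del_nonneg: "del x \<ge> 0"
  by (rule LIMSEQ_le_const[OF conv]) (auto intro!: exI[of _ 0] divide_nonneg_nonneg D_nonneg)

lemma del_zero: "del 0 = 0"
proof -
  have "(\<lambda>n. D (sm (of_nat n) 0) / real n) \<longlonglongrightarrow> 0" by (simp add: sm_zero_right D_zero)
  then show ?thesis using conv LIMSEQ_unique by blast
qed

lemma del_add: "del (x + y) \<le> del x + del y"
proof -
  have "(\<lambda>n. D (sm (of_nat n) x) / real n + D (sm (of_nat n) y) / real n + C0 / real n)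
      \<longlonglongrightarrow> del x + del y + 0"
    by (intro tendsto_add conv lim_const_over_n)
  moreover have "D (sm (of_nat n) (x + y)) / real n \<le>
      D (sm (of_nat n) x) / real n + D (sm (of_nat n) y) / real n + C0 / real n" for n
    using D_add[of "sm (of_nat n) x" "sm (of_nat n) y"]
    by (simp add: sm_add add_divide_distrib[symmetric] divide_right_mono)
  ultimately show ?thesis using LIMSEQ_le[OF conv] by force
qed

lemma D_diff: "\<bar>D (sm b x) - D (sm c x)\<bar> \<le> C0 + C1 * norm (b - c) * d x 0 + C2 * norm (b - c) + C3"
proof -
  have 1: "D (sm b x) \<le> D (sm c x) + (C0 + C1 * norm (b - c) * d x 0 + C2 * norm (b - c) + C3)"
    using D_add[of "sm c x" "sm (b - c) x"] D_bound[of "b - c" x] by (simp add: sm_distrib[symmetric])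
  have 2: "D (sm c x) \<le> D (sm b x) + (C0 + C1 * norm (c - b) * d x 0 + C2 * norm (c - b) + C3)"
    using D_add[of "sm b x" "sm (c - b) x"] D_bound[of "c - b" x] by (simp add: sm_distrib[symmetric])
  show ?thesis using 1 2 by (simp add: norm_minus_commute)
qed


lemma del_hom: "del (sm a x) = norm a * del x"
proof (cases "a = 0")
  case True then show ?thesis by (simp add: sm_zero_left del_zero)
next
  case False
  define r where "r = norm a"
  have r: "r > 0" using False r_def by simp
  define u where "u = a * inverse (of_real r)"
  have un: "norm u = 1" using r unfolding u_def r_def by (simp add: norm_mult norm_inverse)
  have au: "a = u * of_real r" using r unfolding u_def by (simp add: mult.assoc)
  define m where "m n = nat \<lfloor>r * real n\<rfloor>" for n
  have mle: "real (m n) \<le> r * real n" for n using r unfolding m_def by simp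
  have mge: "r * real n - 1 \<le> real (m n)" for n
  proof -
    have "0 \<le> \<lfloor>r * real n\<rfloor>" using r by simp
    then have "real (m n) = real_of_int \<lfloor>r * real n\<rfloor>" unfolding m_def by simp
    moreover have "r * real n - 1 < real_of_int \<lfloor>r * real n\<rfloor>" by (rule real_of_int_floor_gt_diff_one)
    ultimately show ?thesis by simp
  qed
  define B where "B = C0 + C1 * d x 0 + C2 + C3"
  have key: "\<bar>D (sm (of_nat n) (sm a x)) - D (sm (of_nat (m n)) x)\<bar> \<le> B" for n
  proof -
    have e1: "sm (of_nat n) (sm a x) = sm (of_nat n * a) x" by (simp add: sm_assoc)
    have e2: "D (sm (of_nat (m n)) x) = D (sm (u * of_nat (m n)) x)"
      using D_unit[of u "sm (of_nat (m n)) x"] un by (simp add: unitK_def sm_assoc)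
    have e3: "of_nat n * a - u * of_nat (m n) = u * of_real (r * real n - real (m n))"
    proof -
      have "of_nat n * a = (of_nat n * u) * of_real r" by (simp add: au mult.assoc)
      also have "\<dots> = (u * of_nat n) * of_real r" by (simp add: mult_of_nat_commute)
      also have "\<dots> = u * (of_real (real n) * of_real r)" by (simp only: mult.assoc of_real_of_nat_eq)
      also have "\<dots> = u * of_real (r * real n)" by (metis of_real_mult mult.commute)
      finally show ?thesis by (simp add: right_diff_distrib)
    qed
    have nb: "norm (of_nat n * a - u * of_nat (m n)) \<le> 1"
      unfolding e3 norm_mult un norm_of_real using mle[of n] mge[of n] by simp
    have "\<bar>D (sm (of_nat n * a) x) - D (sm (u * of_nat (m n)) x)\<bar>
       \<le> C0 + C1 * norm (of_nat n * a - u * of_nat (m n)) * d x 0 + C2 * norm (of_nat n * a - u * of_nat (m n)) + C3"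
      by (rule D_diff)
    also have "\<dots> \<le> B"
    proof -
      have "C1 * norm (of_nat n * a - u * of_nat (m n)) * d x 0 \<le> C1 * 1 * d x 0"
        using nb C1 d_nonneg[of x 0] by (intro mult_right_mono mult_left_mono) auto
      moreover have "C2 * norm (of_nat n * a - u * of_nat (m n)) \<le> C2 * 1"
        using nb C2 by (intro mult_left_mono) auto
      ultimately show ?thesis unfolding B_def by simp
    qed
    finally show ?thesis using e1 e2 by simp
  qed
  define h where "h k = D (sm (of_nat k) x) / real k" for k
  have fm: "filterlim m sequentially sequentially"
    unfolding m_def
    by (rule filterlim_compose[OF filterlim_nat_sequentially filterlim_compose[OF filterlim_floor_sequentially
          filterlim_tendsto_pos_mult_at_top[OF tendsto_const r filterlim_real_sequentially]]])
  have t1: "(\<lambda>n. h (m n)) \<longlonglongrightarrow> del x"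
    using filterlim_compose[OF conv[of x] fm] by (simp add: h_def o_def)
  have t2: "(\<lambda>n. real (m n) / real n) \<longlonglongrightarrow> r"
  proof (rule tendsto_sandwich[where f="\<lambda>n. r - 1 / real n" and h="\<lambda>n. r"])
    show "\<forall>\<^sub>F n in sequentially. r - 1 / real n \<le> real (m n) / real n"
      using eventually_ge_at_top[of 1]
    proof eventually_elim
      case (elim n)
      have "r - 1 / real n = (r * real n - 1) / real n" using elim by (simp add: field_simps)
      also have "\<dots> \<le> real (m n) / real n" using mge[of n] by (intro divide_right_mono) auto
      finally show ?case .
    qed
    show "\<forall>\<^sub>F n in sequentially. real (m n) / real n \<le> r"
      using eventually_ge_at_top[of 1]
    proof eventually_elim
      case (elim n)
      have "real (m n) / real n \<le> (r * real n) / real n" using mle[of n] by (intro divide_right_mono) auto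
      also have "\<dots> = r" using elim by simp
      finally show ?case .
    qed
    have "(\<lambda>n. r - 1 / real n) \<longlonglongrightarrow> r - 0" by (intro tendsto_intros)
    then show "(\<lambda>n. r - 1 / real n) \<longlonglongrightarrow> r" by simp
  qed simp
  have t3: "(\<lambda>n. (D (sm (of_nat n) (sm a x)) - D (sm (of_nat (m n)) x)) / real n) \<longlonglongrightarrow> 0"
  proof (rule Lim_null_comparison[where g="\<lambda>n. B / real n"])
    show "\<forall>\<^sub>F n in sequentially. norm ((D (sm (of_nat n) (sm a x)) - D (sm (of_nat (m n)) x)) / real n) \<le> B / real n"
      using key by (auto intro!: always_eventually divide_right_mono)
  qed (rule lim_const_over_n)
  have eq: "D (sm (of_nat n) (sm a x)) / real n
      = h (m n) * (real (m n) / real n) + (D (sm (of_nat n) (sm a x)) - D (sm (of_nat (m n)) x)) / real n" for n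
  proof (cases "m n = 0")
    case True then show ?thesis by (simp add: h_def sm_zero_left D_zero diff_divide_distrib)
  next
    case False then show ?thesis by (simp add: h_def diff_divide_distrib)
  qed
  have "(\<lambda>n. h (m n) * (real (m n) / real n) + (D (sm (of_nat n) (sm a x)) - D (sm (of_nat (m n)) x)) / real n)
     \<longlonglongrightarrow> del x * r + 0"
    by (intro tendsto_add tendsto_mult t1 t2 t3)
  moreover have "(\<lambda>n. h (m n) * (real (m n) / real n) + (D (sm (of_nat n) (sm a x)) - D (sm (of_nat (m n)) x)) / real n)
     = (\<lambda>n. D (sm (of_nat n) (sm a x)) / real n)" by (rule ext) (rule eq[symmetric])
  ultimately have "(\<lambda>n. D (sm (of_nat n) (sm a x)) / real n) \<longlonglongrightarrow> del x * r"
    by simp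
  then show ?thesis using LIMSEQ_unique[OF conv] r_def by (simp add: mult.commute)
qed

end

theorem proposition6:
  fixes sm :: "'k::{real_normed_div_algebra,euclidean_space} \<Rightarrow> 'e::ab_group_add \<Rightarrow> 'e"
    and d :: "'e \<Rightarrow> 'e \<Rightarrow> real"
    and \<mu> :: "'k measure"
    and C0 C1 C2 C3 :: real
  assumes "metric_vector_space sm d"
    and "translation_invariant C0 d"
    and "lipschitz_multiplicative C1 C2 C3 sm d"
    and "right_haar_prob \<mu>"
  shows "(0 \<in> E0 \<mu> sm d \<and> (\<forall>x\<in>E0 \<mu> sm d. \<forall>y\<in>E0 \<mu> sm d. x + y \<in> E0 \<mu> sm d)
         \<and> (\<forall>a. \<forall>x\<in>E0 \<mu> sm d. sm a x \<in> E0 \<mu> sm d))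
    \<and> (\<forall>x y. x - y \<in> E0 \<mu> sm d \<longrightarrow> delta0 \<mu> sm d x 0 = delta0 \<mu> sm d y 0)
    \<and> (\<forall>x. delta0 \<mu> sm d x 0 \<ge> 0)
    \<and> (\<forall>x. delta0 \<mu> sm d x 0 = 0 \<longleftrightarrow> x \<in> E0 \<mu> sm d)
    \<and> (\<forall>a x. delta0 \<mu> sm d (sm a x) 0 = norm a * delta0 \<mu> sm d x 0)
    \<and> (\<forall>x y. delta0 \<mu> sm d (x + y) 0 \<le> delta0 \<mu> sm d x 0 + delta0 \<mu> sm d y 0)"
  proof -
  interpret P6 sm d \<mu> C0 C1 C2 C3 using assms by (unfold_locales) auto
  have neg: "del (- z) = del z" for z
    using del_hom[of "-1" z] by (simp add: sm_minus)
  have E0: "x \<in> E0 \<mu> sm d \<longleftrightarrow> del x = 0" for x by (simp add: E0_def)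
  have A: "0 \<in> E0 \<mu> sm d" by (simp add: E0 del_zero)
  have B: "\<forall>x\<in>E0 \<mu> sm d. \<forall>y\<in>E0 \<mu> sm d. x + y \<in> E0 \<mu> sm d"
  proof (intro ballI)
    fix x y assume "x \<in> E0 \<mu> sm d" "y \<in> E0 \<mu> sm d"
    then have "del x = 0" "del y = 0" using E0 by auto
    then have "del (x + y) = 0" using del_add[of x y] del_nonneg[of "x + y"] by simp
    then show "x + y \<in> E0 \<mu> sm d" using E0 by simp
  qed
  have C: "\<forall>a. \<forall>x\<in>E0 \<mu> sm d. sm a x \<in> E0 \<mu> sm d"
    using E0 del_hom by simp
  have D: "del x = del y" if "x - y \<in> E0 \<mu> sm d" for x y
  proof -
    have z: "del (x - y) = 0" using that E0 by simp
    have "del x \<le> del y + del (x - y)" using del_add[of y "x - y"] by simp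
    moreover have "del y \<le> del x + del (- (x - y))" using del_add[of x "- (x - y)"] by simp
    ultimately show ?thesis using z neg[of "x - y"] by simp
  qed
  have D': "\<forall>x y. x - y \<in> E0 \<mu> sm d \<longrightarrow> del x = del y" using D by blast
  have F: "\<forall>x. del x \<ge> 0" using del_nonneg by blast
  have G: "\<forall>x. del x = 0 \<longleftrightarrow> x \<in> E0 \<mu> sm d" using E0 by blast
  have H: "\<forall>a x. del (sm a x) = norm a * del x" using del_hom by blast
  have I: "\<forall>x y. del (x + y) \<le> del x + del y" using del_add by blast
  show ?thesis using A B C D' F G H I by (intro conjI)
qed

end
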